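(* Let $\lambda,\sigma_1,\sigma_2\in\mathbb{C}^*$ and $\eta_1,\eta_2\in\mathbb{C}$. Write $\Omega(\lambda,\eta_1,\sigma_1,0)=\mathbb{C}[X,Y]$ and $\Omega(\lambda,\eta_2,\sigma_2,0)=\mathbb{C}[X_1,Y_1]$, and let $W=\mathrm{span}\{\sum_{t=0}^{j}\binom{j}{t}X^iY^{j-t}\otimes X_1^kY_1^t\mid i,j,k\in\mathbb{N}\}$, a nonzero proper subspace of $\Omega(\lambda,\eta_1,\sigma_1,0)\otimes\Omega(\lambda,\eta_2,\sigma_2,0)$. Then $W$ is a nonzero proper $\mathcal{G}$-submodule of $\Omega(\lambda,\eta_1,\sigma_1,0)\otimes\Omega(\lambda,\eta_2,\sigma_2,0)$.
   Context: The planar Galilean conformal algebra $\mathcal{G}$ is the complex Lie algebra with basis $\{L_m,H_m,I_m,J_m\mid m\in\mathbb{Z}\}$ and brackets $[L_m,L_n]=(n-m)L_{m+n}$, $[L_m,H_n]=nH_{m+n}$, $[L_m,I_n]=(n-m)I_{m+n}$, $[L_m,J_n]=(n-m)J_{m+n}$, $[H_m,I_n]=I_{m+n}$, $[H_m,J_n]=-J_{m+n}$, and $[H_m,H_n]=[I_m,I_n]=[J_m,J_n]=[I_m,J_n]=0$ for all $m,n\in\mathbb{Z}$. For $\lambda,\sigma\in\mathbb{C}^*$, $\eta\in\mathbb{C}$, the module $\Omega(\lambda,\eta,\sigma,0)$ is a polynomial algebra in two variables $X,Y$ with $L_m f(X,Y)=\lambda^m(Y-mX+m\eta)f(X,Y-m)$,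 $H_m f(X,Y)=\lambda^m X f(X,Y-m)$, $I_m f(X,Y)=\lambda^m\sigma f(X-1,Y-m)$, $J_m f(X,Y)=0$. The tensor product has action $x(v\otimes w)=xv\otimes w+v\otimes xw$. $\mathbb{N}$ denotes non-negative integers. *)

theory Defs
  imports Complex_Main
begin

text \<open>The tensor product C[X,Y] (x) C[X1,Y1] is identified with C[X,Y,X1,Y1]
 via f (x) g |-> f(X,Y) g(X1,Y1); polynomials over C are represented faithfully
 by their polynomial functions C^4 -> C (C is infinite).  A point is (X,Y,X1,Y1).\<close>

type_synonym pt = "complex \<times> complex \<times> complex \<times> complex"
type_synonym tfun = "pt \<Rightarrow> complex"

definition cspan :: "tfun set \<Rightarrow> tfun set" where
  "cspan A = {f. \<exists>S c. finite S \<and> S \<subseteq> A \<and> f = (\<lambda>p. \<Sum>v\<in>S. c v * v p)}"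

definition monomial4 :: "nat \<Rightarrow> nat \<Rightarrow> nat \<Rightarrow> nat \<Rightarrow> tfun" where
  "monomial4 i j k l = (\<lambda>(x, y, x1, y1). x ^ i * y ^ j * x1 ^ k * y1 ^ l)"

definition tensor_space :: "tfun set" where
  "tensor_space = cspan {monomial4 i j k l | i j k l. True}"

definition wgen :: "nat \<Rightarrow> nat \<Rightarrow> nat \<Rightarrow> tfun" where
  "wgen i j k = (\<lambda>(x, y, x1, y1).
     \<Sum>t = 0..j. of_nat (j choose t) * x ^ i * y ^ (j - t) * x1 ^ k * y1 ^ t)"

definition Wsub :: "tfun set" where
  "Wsub = cspan {wgen i j k | i j k. True}"

text \<open>Basis of the planar Galilean conformal algebra.\<close>
datatype gca_basis = L int | H int | I int | J int

fun omega_act :: "complex \<Rightarrow> complex \<Rightarrow> complex \<Rightarrow> gca_basis \<Rightarrow>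
    (complex \<Rightarrow> complex \<Rightarrow> complex) \<Rightarrow> (complex \<Rightarrow> complex \<Rightarrow> complex)" where
  "omega_act lam eta sig (L m) f = (\<lambda>x y. lam powi m * (y - of_int m * x + of_int m * eta) * f x (y - of_int m))"
| "omega_act lam eta sig (H m) f = (\<lambda>x y. lam powi m * x * f x (y - of_int m))"
| "omega_act lam eta sig (I m) f = (\<lambda>x y. lam powi m * sig * f (x - 1) (y - of_int m))"
| "omega_act lam eta sig (J m) f = (\<lambda>x y. 0)"

text \<open>Action on the tensor product: x(v(x)w) = xv(x)w + v(x)xw, i.e. the first
 module acts in the variables (X,Y), the second in (X1,Y1).\<close>
definition tensor_act :: "complex \<Rightarrow> complex \<Rightarrow> complex \<Rightarrow> complex \<Rightarrow> complex \<Rightarrow>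
    gca_basis \<Rightarrow> tfun \<Rightarrow> tfun" where
  "tensor_act lam eta1 sig1 eta2 sig2 g F = (\<lambda>(x, y, x1, y1).
      omega_act lam eta1 sig1 g (\<lambda>a b. F (a, b, x1, y1)) x y
    + omega_act lam eta2 sig2 g (\<lambda>a b. F (x, y, a, b)) x1 y1)"

text \<open>G-submodule of the tensor product: a complex subspace stable under the
 action of every basis element (hence of all of G, by linearity).\<close>
definition is_submodule :: "complex \<Rightarrow> complex \<Rightarrow> complex \<Rightarrow> complex \<Rightarrow> complex \<Rightarrow>
    tfun set \<Rightarrow> bool" where
  "is_submodule lam eta1 sig1 eta2 sig2 U \<longleftrightarrow>
     U \<subseteq> tensor_space \<and> (\<lambda>p. 0) \<in> U \<and>
     (\<forall>F\<in>U. \<forall>G\<in>U. (\<lambda>p. F p + G p) \<in> U) \<and>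
     (\<forall>c. \<forall>F\<in>U. (\<lambda>p. c * F p) \<in> U) \<and>
     (\<forall>g. \<forall>F\<in>U. tensor_act lam eta1 sig1 eta2 sig2 g F \<in> U)"

end

theory Submission
  imports Defs
begin

lemma cspan_zero: "(\<lambda>p. 0) \<in> cspan A"
  unfolding cspan_def by (intro CollectI exI[of _ "{}"] exI[of _ "\<lambda>_. 0"]) simp

lemma cspan_base: "v \<in> A \<Longrightarrow> v \<in> cspan A"
  unfolding cspan_def by (intro CollectI exI[of _ "{v}"] exI[of _ "\<lambda>_. 1"]) simp

lemma cspan_scale: "f \<in> cspan A \<Longrightarrow> (\<lambda>p. d * f p) \<in> cspan A"
proof -
  assume "f \<in> cspan A"
  then obtain S c where S: "finite S" "S \<subseteq> A" "f = (\<lambda>p. \<Sum>v\<in>S. c v * v p)"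
    unfolding cspan_def by blast
  have "(\<lambda>p. d * f p) = (\<lambda>p. \<Sum>v\<in>S. (d * c v) * v p)"
    using S(3) by (simp add: sum_distrib_left mult.assoc)
  then show ?thesis using S unfolding cspan_def
    by (intro CollectI exI[of _ S] exI[of _ "\<lambda>v. d * c v"]) simp
qed

lemma cspan_add: "f \<in> cspan A \<Longrightarrow> g \<in> cspan A \<Longrightarrow> (\<lambda>p. f p + g p) \<in> cspan A"
proof -
  assume "f \<in> cspan A" "g \<in> cspan A"
  then obtain S c T d where S: "finite S" "S \<subseteq> A" "f = (\<lambda>p. \<Sum>v\<in>S. c v * v p)"
    and T: "finite T" "T \<subseteq> A" "g = (\<lambda>p. \<Sum>v\<in>T. d v * v p)"
    unfolding cspan_def by blast
  define e where "e v = (if v \<in> S then c v else 0) + (if v \<in> T then d v else 0)" for v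
  have "(\<lambda>p. f p + g p) = (\<lambda>p. \<Sum>v\<in>S \<union> T. e v * v p)"
  proof
    fix p
    have "(\<Sum>v\<in>S \<union> T. e v * v p) = (\<Sum>v\<in>S \<union> T. (if v \<in> S then c v * v p else 0))
          + (\<Sum>v\<in>S \<union> T. (if v \<in> T then d v * v p else 0))"
      unfolding sum.distrib[symmetric] by (rule sum.cong) (auto simp: e_def distrib_right)
    also have "\<dots> = (\<Sum>v\<in>S. c v * v p) + (\<Sum>v\<in>T. d v * v p)"
    proof -
      have "(\<Sum>v\<in>S \<union> T. (if v \<in> S then c v * v p else 0)) = (\<Sum>v\<in>{v \<in> S \<union> T. v \<in> S}. c v * v p)"
        using S(1) T(1) by (intro sum.inter_filter[symmetric]) simp
      moreover have "(\<Sum>v\<in>S \<union> T. (if v \<in> T then d v * v p else 0)) = (\<Sum>v\<in>{v \<in> S \<union> T. v \<in> T}. d v * v p)"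
        using S(1) T(1) by (intro sum.inter_filter[symmetric]) simp
      moreover have "{v \<in> S \<union> T. v \<in> S} = S" "{v \<in> S \<union> T. v \<in> T} = T" by auto
      ultimately show ?thesis by simp
    qed
    finally show "f p + g p = (\<Sum>v\<in>S \<union> T. e v * v p)" using S(3) T(3) by simp
  qed
  then show ?thesis using S T unfolding cspan_def by blast
qed

lemma cspan_sum: "finite S \<Longrightarrow> (\<And>i. i \<in> S \<Longrightarrow> f i \<in> cspan A) \<Longrightarrow> (\<lambda>p. \<Sum>i\<in>S. f i p) \<in> cspan A"
proof (induction S rule: finite_induct)
  case empty then show ?case using cspan_zero by simp
next
  case (insert a S)
  then show ?case using cspan_add[of "f a" A "\<lambda>p. \<Sum>i\<in>S. f i p"] by simp
qed

lemma cspan_closed: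
  assumes "(\<lambda>p. 0) \<in> U" "\<And>f g. f \<in> U \<Longrightarrow> g \<in> U \<Longrightarrow> (\<lambda>p. f p + g p) \<in> U"
    "\<And>f d. f \<in> U \<Longrightarrow> (\<lambda>p. d * f p) \<in> U" "A \<subseteq> U"
  shows "cspan A \<subseteq> U"
proof
  fix f assume "f \<in> cspan A"
  then obtain S c where S: "finite S" "S \<subseteq> A" "f = (\<lambda>p. \<Sum>v\<in>S. c v * v p)"
    unfolding cspan_def by blast
  have "S \<subseteq> A \<Longrightarrow> (\<lambda>p. \<Sum>v\<in>S. c v * v p) \<in> U" using S(1)
  proof (induction S rule: finite_induct)
    case empty then show ?case using assms(1) by simp
  next
    case (insert a S)
    then have "a \<in> U" using assms(4) by auto
    then have "(\<lambda>p. c a * a p) \<in> U" using assms(3) by blast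
    with insert show ?case using assms(2)[of "\<lambda>p. c a * a p" "\<lambda>p. \<Sum>v\<in>S. c v * v p"] by simp
  qed
  then show "f \<in> U" using S by simp
qed

abbreviation "TS \<equiv> tensor_space"

lemma mono_T: "monomial4 i j k l \<in> TS"
  unfolding tensor_space_def by (rule cspan_base) blast

lemma T_zero: "(\<lambda>p. 0) \<in> TS"
  unfolding tensor_space_def by (rule cspan_zero)
lemma T_add: "f \<in> TS \<Longrightarrow> g \<in> TS \<Longrightarrow> (\<lambda>p. f p + g p) \<in> TS"
  unfolding tensor_space_def by (rule cspan_add)
lemma T_scale: "f \<in> TS \<Longrightarrow> (\<lambda>p. d * f p) \<in> TS"
  unfolding tensor_space_def by (rule cspan_scale)
lemma T_sum: "finite S \<Longrightarrow> (\<And>i. i \<in> S \<Longrightarrow> f i \<in> TS) \<Longrightarrow> (\<lambda>p. \<Sum>i\<in>S. f i p) \<in> TS"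
  unfolding tensor_space_def by (rule cspan_sum)
lemma T_diff: "f \<in> TS \<Longrightarrow> g \<in> TS \<Longrightarrow> (\<lambda>p. f p - g p) \<in> TS"
  using T_add[of f "\<lambda>p. (-1) * g p"] T_scale[of g "-1"] by simp

lemma T_rep: "F \<in> TS \<Longrightarrow> \<exists>S c. finite S \<and> S \<subseteq> {monomial4 i j k l | i j k l. True} \<and> F = (\<lambda>p. \<Sum>v\<in>S. c v * v p)"
  unfolding tensor_space_def cspan_def by blast

lemma mono_mult: "(\<lambda>p. monomial4 i j k l p * monomial4 i' j' k' l' p) = monomial4 (i+i') (j+j') (k+k') (l+l')"
  unfolding monomial4_def by (auto simp: power_add)

lemma T_mult: assumes "f \<in> TS" "g \<in> TS" shows "(\<lambda>p. f p * g p) \<in> TS"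
proof -
  obtain S c where S: "finite S" "S \<subseteq> {monomial4 i j k l | i j k l. True}" "f = (\<lambda>p. \<Sum>v\<in>S. c v * v p)"
    using T_rep[OF assms(1)] by blast
  obtain S' d where S': "finite S'" "S' \<subseteq> {monomial4 i j k l | i j k l. True}" "g = (\<lambda>p. \<Sum>v\<in>S'. d v * v p)"
    using T_rep[OF assms(2)] by blast
  have "f p * g p = (\<Sum>v\<in>S. \<Sum>w\<in>S'. (c v * d w) * (v p * w p))" for p
    by (simp only: S(3) S'(3) sum_product) (intro sum.cong refl; simp add: mult_ac)
  then have "(\<lambda>p. f p * g p) = (\<lambda>p. \<Sum>v\<in>S. \<Sum>w\<in>S'. (c v * d w) * (v p * w p))"
    by simp
  moreover have "(\<lambda>p. \<Sum>v\<in>S. \<Sum>w\<in>S'. (c v * d w) * (v p * w p)) \<in> TS"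
  proof (rule T_sum[OF S(1)])
    fix v assume v: "v \<in> S"
    show "(\<lambda>p. \<Sum>w\<in>S'. (c v * d w) * (v p * w p)) \<in> TS"
    proof (rule T_sum[OF S'(1)])
      fix w assume w: "w \<in> S'"
      from v S(2) obtain i j k l where "v = monomial4 i j k l" by blast
      moreover from w S'(2) obtain i' j' k' l' where "w = monomial4 i' j' k' l'" by blast
      ultimately have "(\<lambda>p. v p * w p) \<in> TS" using mono_mult mono_T by simp
      then show "(\<lambda>p. (c v * d w) * (v p * w p)) \<in> TS" by (rule T_scale)
    qed
  qed
  ultimately show ?thesis by simp
qed

lemma T_pow: "f \<in> TS \<Longrightarrow> (\<lambda>p. f p ^ n) \<in> TS"
proof (induction n)
  case 0 then show ?case using mono_T[of 0 0 0 0] by (simp add: monomial4_def case_prod_unfold)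
next
  case (Suc n) then show ?case using T_mult[of f "\<lambda>p. f p ^ n"] by simp
qed

lemma T_const: "(\<lambda>p. d) \<in> TS"
  using T_scale[OF mono_T[of 0 0 0 0], of d] by (simp add: monomial4_def case_prod_unfold)

lemma T_x: "(\<lambda>p. fst p) \<in> TS"
  using mono_T[of 1 0 0 0] by (simp add: monomial4_def case_prod_unfold)
lemma T_y: "(\<lambda>p. fst (snd p)) \<in> TS"
  using mono_T[of 0 1 0 0] by (simp add: monomial4_def case_prod_unfold)
lemma T_x1: "(\<lambda>p. fst (snd (snd p))) \<in> TS"
  using mono_T[of 0 0 1 0] by (simp add: monomial4_def case_prod_unfold)
lemma T_y1: "(\<lambda>p. snd (snd (snd p))) \<in> TS"
  using mono_T[of 0 0 0 1] by (simp add: monomial4_def case_prod_unfold)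

lemma T_subst:
  assumes F: "F \<in> TS" and s: "(\<lambda>p. fst (\<sigma> p)) \<in> TS" "(\<lambda>p. fst (snd (\<sigma> p))) \<in> TS"
    "(\<lambda>p. fst (snd (snd (\<sigma> p)))) \<in> TS" "(\<lambda>p. snd (snd (snd (\<sigma> p)))) \<in> TS"
  shows "(\<lambda>p. F (\<sigma> p)) \<in> TS"
proof -
  obtain S c where S: "finite S" "S \<subseteq> {monomial4 i j k l | i j k l. True}" "F = (\<lambda>p. \<Sum>v\<in>S. c v * v p)"
    using T_rep[OF F] by blast
  have "(\<lambda>p. \<Sum>v\<in>S. c v * v (\<sigma> p)) \<in> TS"
  proof (rule T_sum[OF S(1)])
    fix v assume "v \<in> S"
    then obtain i j k l where v: "v = monomial4 i j k l" using S(2) by blast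
    have "(\<lambda>p. v (\<sigma> p)) = (\<lambda>p. ((fst (\<sigma> p)) ^ i * (fst (snd (\<sigma> p))) ^ j) *
        ((fst (snd (snd (\<sigma> p)))) ^ k * (snd (snd (snd (\<sigma> p)))) ^ l))"
      unfolding v monomial4_def by (simp add: case_prod_unfold mult.assoc)
    moreover have "\<dots> \<in> TS"
      by (intro T_mult T_pow s)
    ultimately have "(\<lambda>p. v (\<sigma> p)) \<in> TS" by simp
    then show "(\<lambda>p. c v * v (\<sigma> p)) \<in> TS" by (rule T_scale)
  qed
  then show ?thesis using S(3) by simp
qed


lemma T_subst4:
  assumes F: "F \<in> TS" and s: "a \<in> TS" "b \<in> TS" "c \<in> TS" "d \<in> TS"
  shows "(\<lambda>p. F (a p, b p, c p, d p)) \<in> TS"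
  using T_subst[OF F, of "\<lambda>p. (a p, b p, c p, d p)"] s by simp

definition inv4 :: "tfun \<Rightarrow> bool" where
  "inv4 F \<longleftrightarrow> (\<forall>x y x1 y1. F (x, y, x1, y1) = F (x, y + y1, x1, 0))"

lemma wgen_closed: "wgen i j k = (\<lambda>(x, y, x1, y1). x ^ i * x1 ^ k * (y + y1) ^ j)"
proof (rule ext, clarify)
  fix x y x1 y1 :: complex
  have "(y + y1) ^ j = (\<Sum>t = 0..j. of_nat (j choose t) * y1 ^ t * y ^ (j - t))"
    using binomial_ring[of y1 y j] by (simp add: add.commute atLeast0AtMost)
  then have "x ^ i * x1 ^ k * (y + y1) ^ j = (\<Sum>t = 0..j. x ^ i * x1 ^ k * (of_nat (j choose t) * y1 ^ t * y ^ (j - t)))"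
    by (simp add: sum_distrib_left)
  also have "\<dots> = (\<Sum>t = 0..j. of_nat (j choose t) * x ^ i * y ^ (j - t) * x1 ^ k * y1 ^ t)"
    by (rule sum.cong) (simp_all add: mult_ac)
  finally show "wgen i j k (x, y, x1, y1) = x ^ i * x1 ^ k * (y + y1) ^ j"
    unfolding wgen_def by simp
qed

lemma wgen_T: "wgen i j k \<in> TS"
proof -
  have "wgen i j k = (\<lambda>p. (fst p ^ i * fst (snd (snd p)) ^ k) * (fst (snd p) + snd (snd (snd p))) ^ j)"
    unfolding wgen_closed by (simp add: case_prod_unfold)
  also have "\<dots> \<in> TS" by (intro T_mult T_pow T_add T_x T_y T_x1 T_y1)
  finally show ?thesis .
qed

lemma W_char: "Wsub = {F \<in> TS. inv4 F}"
proof
  show "Wsub \<subseteq> {F \<in> TS. inv4 F}" unfolding Wsub_def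
  proof (rule cspan_closed)
    show "(\<lambda>p. 0) \<in> {F \<in> TS. inv4 F}" using T_zero by (simp add: inv4_def)
    show "(\<lambda>p. f p + g p) \<in> {F \<in> TS. inv4 F}" if "f \<in> {F \<in> TS. inv4 F}" "g \<in> {F \<in> TS. inv4 F}" for f g
      using that T_add[of f g] by (simp add: inv4_def)
    show "(\<lambda>p. d * f p) \<in> {F \<in> TS. inv4 F}" if "f \<in> {F \<in> TS. inv4 F}" for f d
      using that T_scale[of f d] by (simp add: inv4_def)
    show "{wgen i j k |i j k. True} \<subseteq> {F \<in> TS. inv4 F}"
      using wgen_T by (auto simp: inv4_def wgen_closed add.assoc)
  qed
next
  show "{F \<in> TS. inv4 F} \<subseteq> Wsub"
  proof
    fix F assume "F \<in> {F \<in> TS. inv4 F}"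
    then have F: "F \<in> TS" and iF: "inv4 F" by auto
    obtain S c where S: "finite S" "S \<subseteq> {monomial4 i j k l | i j k l. True}" "F = (\<lambda>p. \<Sum>v\<in>S. c v * v p)"
      using T_rep[OF F] by blast
    define \<rho> where "\<rho> p = (fst p, fst (snd p) + snd (snd (snd p)), fst (snd (snd p)), (0::complex))" for p :: pt
    have "F = (\<lambda>p. F (\<rho> p))"
      using iF unfolding inv4_def \<rho>_def by (auto simp: fun_eq_iff)
    also have "\<dots> = (\<lambda>p. \<Sum>v\<in>S. c v * v (\<rho> p))" using S(3) by simp
    also have "\<dots> \<in> Wsub" unfolding Wsub_def
    proof (rule cspan_sum[OF S(1)])
      fix v assume "v \<in> S"
      then obtain i j k l where v: "v = monomial4 i j k l" using S(2) by blast
      have "(\<lambda>p. v (\<rho> p)) = (\<lambda>p. (0::complex) ^ l * wgen i j k p)"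
        unfolding v monomial4_def wgen_closed \<rho>_def by (auto simp: fun_eq_iff mult_ac)
      moreover have "(\<lambda>p. (0::complex) ^ l * wgen i j k p) \<in> cspan {wgen i j k |i j k. True}"
        by (rule cspan_scale, rule cspan_base) blast
      ultimately have "(\<lambda>p. v (\<rho> p)) \<in> cspan {wgen i j k |i j k. True}" by simp
      then show "(\<lambda>p. c v * v (\<rho> p)) \<in> cspan {wgen i j k |i j k. True}" by (rule cspan_scale)
    qed
    finally show "F \<in> Wsub" .
  qed
qed

lemma act_T:
  assumes F: "F \<in> TS"
  shows "tensor_act lam eta1 sig1 eta2 sig2 g F \<in> TS"
proof (cases g)
  case (L m)
  have "tensor_act lam eta1 sig1 eta2 sig2 g F = (\<lambda>p.
     (lam powi m * (fst (snd p) - of_int m * fst p + of_int m * eta1)) *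
        F (fst p, fst (snd p) - of_int m, fst (snd (snd p)), snd (snd (snd p)))
   + (lam powi m * (snd (snd (snd p)) - of_int m * fst (snd (snd p)) + of_int m * eta2)) *
        F (fst p, fst (snd p), fst (snd (snd p)), snd (snd (snd p)) - of_int m))"
    unfolding L by (simp add: tensor_act_def case_prod_unfold fun_eq_iff)
  also have "\<dots> \<in> TS"
    by (intro T_add T_mult T_diff T_const T_x T_y T_x1 T_y1 T_subst4 F)
  finally show ?thesis .
next
  case (H m)
  have "tensor_act lam eta1 sig1 eta2 sig2 g F = (\<lambda>p.
     (lam powi m * fst p) *
        F (fst p, fst (snd p) - of_int m, fst (snd (snd p)), snd (snd (snd p)))
   + (lam powi m * fst (snd (snd p))) *
        F (fst p, fst (snd p), fst (snd (snd p)), snd (snd (snd p)) - of_int m))"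
    unfolding H by (simp add: tensor_act_def case_prod_unfold fun_eq_iff)
  also have "\<dots> \<in> TS"
    by (intro T_add T_mult T_diff T_const T_x T_y T_x1 T_y1 T_subst4 F)
  finally show ?thesis .
next
  case (I m)
  have "tensor_act lam eta1 sig1 eta2 sig2 g F = (\<lambda>p.
     (lam powi m * sig1) *
        F (fst p - 1, fst (snd p) - of_int m, fst (snd (snd p)), snd (snd (snd p)))
   + (lam powi m * sig2) *
        F (fst p, fst (snd p), fst (snd (snd p)) - 1, snd (snd (snd p)) - of_int m))"
    unfolding I by (simp add: tensor_act_def case_prod_unfold fun_eq_iff)
  also have "\<dots> \<in> TS"
    by (intro T_add T_mult T_diff T_const T_x T_y T_x1 T_y1 T_subst4 F)
  finally show ?thesis .
next
  case (J m)
  have "tensor_act lam eta1 sig1 eta2 sig2 g F = (\<lambda>p. 0)"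
    unfolding J by (simp add: tensor_act_def case_prod_unfold fun_eq_iff)
  then show ?thesis using T_zero by simp
qed

lemma act_inv:
  assumes iF: "inv4 F"
  shows "inv4 (tensor_act lam eta1 sig1 eta2 sig2 g F)"
  unfolding inv4_def
proof (intro allI)
  fix x y x1 y1 :: complex
  have iv: "F (a, b, c, d) = F (a, b + d, c, 0)" for a b c d using iF unfolding inv4_def by blast
  show "tensor_act lam eta1 sig1 eta2 sig2 g F (x, y, x1, y1) =
        tensor_act lam eta1 sig1 eta2 sig2 g F (x, y + y1, x1, 0)"
  proof (cases g)
    case (L m)
    have e1: "F (x, y - of_int m, x1, y1) = F (x, y + y1 - of_int m, x1, 0)"
      using iv[of x "y - of_int m" x1 y1] by (simp add: algebra_simps)
    have e2: "F (x, y, x1, y1 - of_int m) = F (x, y + y1 - of_int m, x1, 0)"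
      using iv[of x y x1 "y1 - of_int m"] by (simp add: algebra_simps)
    have e3: "F (x, y + y1, x1, - of_int m) = F (x, y + y1 - of_int m, x1, 0)"
      using iv[of x "y + y1" x1 "- of_int m"] by (simp add: algebra_simps)
    show ?thesis unfolding L by (simp add: tensor_act_def e1 e2 e3; simp add: algebra_simps)
  next
    case (H m)
    have e1: "F (x, y - of_int m, x1, y1) = F (x, y + y1 - of_int m, x1, 0)"
      using iv[of x "y - of_int m" x1 y1] by (simp add: algebra_simps)
    have e2: "F (x, y, x1, y1 - of_int m) = F (x, y + y1 - of_int m, x1, 0)"
      using iv[of x y x1 "y1 - of_int m"] by (simp add: algebra_simps)
    have e3: "F (x, y + y1, x1, - of_int m) = F (x, y + y1 - of_int m, x1, 0)"
      using iv[of x "y + y1" x1 "- of_int m"] by (simp add: algebra_simps)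
    show ?thesis unfolding H by (simp add: tensor_act_def e1 e2 e3; simp add: algebra_simps)
  next
    case (I m)
    have e1: "F (x - 1, y - of_int m, x1, y1) = F (x - 1, y + y1 - of_int m, x1, 0)"
      using iv[of "x - 1" "y - of_int m" x1 y1] by (simp add: algebra_simps)
    have e2: "F (x, y, x1 - 1, y1 - of_int m) = F (x, y + y1 - of_int m, x1 - 1, 0)"
      using iv[of x y "x1 - 1" "y1 - of_int m"] by (simp add: algebra_simps)
    have e3: "F (x, y + y1, x1 - 1, - of_int m) = F (x, y + y1 - of_int m, x1 - 1, 0)"
      using iv[of x "y + y1" "x1 - 1" "- of_int m"] by (simp add: algebra_simps)
    show ?thesis unfolding I by (simp add: tensor_act_def e1 e2 e3)
  next
    case (J m)
    show ?thesis unfolding J by (simp add: tensor_act_def)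
  qed
qed

theorem proposition4p4:
  fixes lam sig1 sig2 eta1 eta2 :: complex
  assumes "lam \<noteq> 0" and "sig1 \<noteq> 0" and "sig2 \<noteq> 0"
  shows "is_submodule lam eta1 sig1 eta2 sig2 Wsub \<and>
         (\<exists>F\<in>Wsub. F \<noteq> (\<lambda>p. 0)) \<and> Wsub \<noteq> tensor_space"
proof (intro conjI)
  show "is_submodule lam eta1 sig1 eta2 sig2 Wsub"
    unfolding is_submodule_def
  proof (intro conjI ballI allI)
    show "Wsub \<subseteq> TS" unfolding W_char by blast
    show "(\<lambda>p. 0) \<in> Wsub" unfolding W_char using T_zero by (simp add: inv4_def)
    show "(\<lambda>p. F p + G p) \<in> Wsub" if "F \<in> Wsub" "G \<in> Wsub" for F G
      using that T_add[of F G] unfolding W_char by (simp add: inv4_def)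
    show "(\<lambda>p. c * F p) \<in> Wsub" if "F \<in> Wsub" for F c
      using that T_scale[of F c] unfolding W_char by (simp add: inv4_def)
    show "tensor_act lam eta1 sig1 eta2 sig2 g F \<in> Wsub" if "F \<in> Wsub" for F g
      using that act_T[of F] act_inv[of F] unfolding W_char by simp
  qed
  have "wgen 0 0 0 \<in> Wsub" unfolding Wsub_def by (rule cspan_base) blast
  moreover have "wgen 0 0 0 \<noteq> (\<lambda>p. 0)"
  proof
    assume "wgen 0 0 0 = (\<lambda>p. 0)"
    then have "wgen 0 0 0 (0,0,0,0) = 0" by simp
    then show False by (simp add: wgen_def)
  qed
  ultimately show "\<exists>F\<in>Wsub. F \<noteq> (\<lambda>p. 0)" by blast
  have "monomial4 0 1 0 0 \<notin> Wsub"
  proof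
    assume "monomial4 0 1 0 0 \<in> Wsub"
    then have "inv4 (monomial4 0 1 0 0)" unfolding W_char by blast
    then have "monomial4 0 1 0 0 (0,0,0,1) = monomial4 0 1 0 0 (0,0+1,0,0)"
      unfolding inv4_def by blast
    then show False by (simp add: monomial4_def)
  qed
  then show "Wsub \<noteq> tensor_space" using mono_T[of 0 1 0 0] by blast
qed

end
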